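(* Let $X$ and $Y$ be random variables on a probability space $(\Omega,\mathcal{F},\mathbb{P})$ taking values in Polish spaces $(\mathbb{S}_1,\rho_1)$ and $(\mathbb{S}_2,\rho_2)$, respectively. If the law of $Y$ is atomless, then for every $\epsilon>0$ there exists a random variable $Z$ with values in $\mathbb{S}_2$ such that $\mathrm{Law}(Z)=\mathrm{Law}(Y)$, $\rho_2(Y,Z)\le\epsilon$ a.s., and $X$ is $Z$-measurable, i.e. $X=f(Z)$ a.s. for some Borel function $f:\mathbb{S}_2\to\mathbb{S}_1$. *)

theory Defs
  imports "HOL-Probability.Probability"
begin

definition atomless :: "'a measure \<Rightarrow> bool" where
  "atomless N \<longleftrightarrow>
     \<not> (\<exists>A\<in>sets N. measure N A > 0 \<and>
           (\<forall>B\<in>sets N. B \<subseteq> A \<longrightarrow> measure N B = 0 \<or> measure N B = measure N A))"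

end

theory Submission
  imports Defs
begin

lemma digit_lemma:
  fixes b :: "nat \<Rightarrow> bool"
  shows "odd \<lfloor>4 ^ Suc N * (\<Sum>n. (if b n then 1 else 0) / 4 ^ Suc n :: real)\<rfloor> \<longleftrightarrow> b N"
proof -
  define c where "c n = (if b n then 1 else 0 :: real)" for n
  have c01: "0 \<le> c n" "c n \<le> 1" for n by (auto simp: c_def)
  have geo: "summable (\<lambda>n. (1/4::real) ^ Suc n)"
    by (subst summable_Suc_iff) (rule summable_geometric, simp)
  have sm: "summable (\<lambda>n. c n / 4 ^ Suc n)"
    by (rule summable_comparison_test'[OF geo, of 0]) (auto simp: c01 power_divide c_def)
  define T where "T = (\<Sum>n. c (n + Suc N) / 4 ^ Suc n)"
  have smT: "summable (\<lambda>n. c (n + Suc N) / 4 ^ Suc n)"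
    by (rule summable_comparison_test'[OF geo, of 0]) (auto simp: c01 power_divide c_def)
  have split: "(\<Sum>n. c n / 4 ^ Suc n) = (\<Sum>n. c (n + Suc N) / 4 ^ Suc (n + Suc N)) + (\<Sum>n<Suc N. c n / 4 ^ Suc n)"
    by (rule suminf_split_initial_segment[OF sm])
  have tail: "4 ^ Suc N * (\<Sum>n. c (n + Suc N) / 4 ^ Suc (n + Suc N)) = T"
  proof -
    have eq: "(\<lambda>n. c (n + Suc N) / 4 ^ Suc (n + Suc N)) = (\<lambda>n. (1 / 4 ^ Suc N) * (c (n + Suc N) / 4 ^ Suc n))"
      by (auto simp: power_add field_simps)
    have "(\<Sum>n. c (n + Suc N) / 4 ^ Suc (n + Suc N)) = (1 / 4 ^ Suc N) * T"
      unfolding T_def eq by (rule suminf_mult[OF smT])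
    then show ?thesis by simp
  qed
  have T0: "0 \<le> T" unfolding T_def by (rule suminf_nonneg[OF smT]) (auto simp: c01)
  have "T \<le> (\<Sum>n. (1/4::real) ^ Suc n)" unfolding T_def
    by (rule suminf_le[OF _ smT geo]) (auto simp: c01 power_divide c_def)
  also have "\<dots> = 1/3"
  proof -
    have "(\<Sum>n. (1/4::real) ^ Suc n) = (\<Sum>n. (1/4) * (1/4::real) ^ n)" by simp
    also have "\<dots> = (1/4) * (\<Sum>n. (1/4::real) ^ n)"
      by (rule suminf_mult) (rule summable_geometric, simp)
    also have "\<dots> = 1/3" using suminf_geometric[of "1/4::real"] by simp
    finally show ?thesis .
  qed
  finally have T1: "T < 1" by simp
  define A :: int where "A = (\<Sum>n<Suc N. (if b n then 1 else 0) * 4 ^ (N - n))"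
  have head: "4 ^ Suc N * (\<Sum>n<Suc N. c n / 4 ^ Suc n) = of_int A"
    unfolding A_def sum_distrib_left of_int_sum
    apply (rule sum.cong, simp)
    apply (auto simp: c_def field_simps power_add[symmetric])
    done
  have "4 ^ Suc N * (\<Sum>n. c n / 4 ^ Suc n) = of_int A + T"
    using split tail head by (simp add: distrib_left)
  then have fl: "\<lfloor>4 ^ Suc N * (\<Sum>n. c n / 4 ^ Suc n)\<rfloor> = A"
    using T0 T1 by (simp add: floor_eq_iff)
  have ev: "even (\<Sum>n<N. (if b n then 1 else 0) * (4::int) ^ (N - n))"
    by (rule dvd_sum) (auto simp: dvd_mult)
  have "A = (if b N then 1 else 0) + (\<Sum>n<N. (if b n then 1 else 0) * (4::int) ^ (N - n))"
    unfolding A_def by simp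
  then have "odd A \<longleftrightarrow> b N" using ev by auto
  then show ?thesis using fl unfolding c_def by simp
qed

lemma dense_seq:
  obtains d :: "nat \<Rightarrow> 'c::{second_countable_topology, metric_space}"
  where "\<And>y e. e > 0 \<Longrightarrow> \<exists>j. dist (d j) y < e"
proof -
  obtain D :: "'c set" where D: "countable D" "\<And>X. open X \<Longrightarrow> X \<noteq> {} \<Longrightarrow> \<exists>d\<in>D. d \<in> X"
    using countable_dense_setE by blast
  have ne: "D \<noteq> {}" using D(2)[of UNIV] by auto
  show ?thesis
  proof
    fix y :: 'c and e :: real assume "e > 0"
    then obtain x where "x \<in> D" "x \<in> ball y e" using D(2)[of "ball y e"] by auto
    then obtain j where "x = from_nat_into D j" using range_from_nat_into[OF ne D(1)] by blast
    then show "\<exists>j. dist (from_nat_into D j) y < e" using \<open>x \<in> ball y e\<close> by (auto simp: dist_commute)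
  qed
qed

lemma polish_embedding:
  "\<exists>h::'c::polish_space \<Rightarrow> real. \<exists>\<tau>. h \<in> borel_measurable borel \<and> \<tau> \<in> borel_measurable borel \<and> (\<forall>y. \<tau> (h y) = y)"
proof -
  obtain d :: "nat \<Rightarrow> 'c" where d: "\<And>y e. e > 0 \<Longrightarrow> \<exists>j. dist (d j) y < e"
    using dense_seq by blast
  define bitc where "bitc y n = (dist (d (fst (prod_decode n))) y < 1 / Suc (snd (prod_decode n)))" for y n
  define h where "h y = (\<Sum>n. (if bitc y n then 1 else 0) / 4 ^ Suc n :: real)" for y
  define dig where "dig t n = odd \<lfloor>4 ^ Suc n * (t::real)\<rfloor>" for t n
  define J where "J m t = (LEAST j. dig t (prod_encode (j, m)))" for m t
  define s where "s m t = d (J m t)" for m t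
  define \<tau> where "\<tau> t = (if Cauchy (\<lambda>m. s m t) then lim (\<lambda>m. s m t) else d 0)" for t
  have digh: "dig (h y) n = bitc y n" for y n
    unfolding dig_def h_def by (rule digit_lemma)
  have sconv: "(\<lambda>m. s m (h y)) \<longlonglongrightarrow> y" for y
  proof -
    have "dist (s m (h y)) y < 1 / Suc m" for m
    proof -
      have ex: "\<exists>j. dig (h y) (prod_encode (j, m))"
        using d[of "1 / Suc m" y] by (auto simp: digh bitc_def)
      show ?thesis using LeastI_ex[OF ex] unfolding s_def J_def by (simp add: digh bitc_def)
    qed
    then have "(\<lambda>m. dist (s m (h y)) y) \<longlonglongrightarrow> 0"
      by (intro tendsto_sandwich[OF _ _ tendsto_const LIMSEQ_inverse_real_of_nat])
         (auto intro!: always_eventually less_imp_le simp: inverse_eq_divide)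
    then show ?thesis by (rule tendsto_dist_iff[THEN iffD2])
  qed
  have inv: "\<tau> (h y) = y" for y
    using sconv[of y] unfolding \<tau>_def by (auto simp: LIMSEQ_imp_Cauchy limI)
  have [measurable]: "(\<lambda>t. dig t n) \<in> measurable borel (count_space UNIV)" for n
    unfolding dig_def by measurable
  have [measurable]: "(\<lambda>t. J m t) \<in> measurable borel (count_space UNIV)" for m
    unfolding J_def by measurable
  have sm[measurable]: "(\<lambda>t. s m t) \<in> borel_measurable borel" for m
    unfolding s_def by measurable
  have hm: "h \<in> borel_measurable borel"
    unfolding h_def bitc_def by measurable
  have tm: "\<tau> \<in> borel_measurable borel"
  proof (rule borel_measurable_LIMSEQ_metric)
    show "(\<lambda>t. if Cauchy (\<lambda>m. s m t) then s i t else d 0) \<in> borel_measurable borel" for i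
      by measurable
    show "(\<lambda>i. if Cauchy (\<lambda>m. s m t) then s i t else d 0) \<longlonglongrightarrow> \<tau> t" for t
      unfolding \<tau>_def by (auto simp: Cauchy_convergent_iff convergent_LIMSEQ_iff)
  qed
  show ?thesis using hm tm inv by blast
qed

definition clamp :: "real \<Rightarrow> real" where
  "clamp u = (if 0 < u \<and> u < 1 then u else 1/2)"

definition quant :: "real measure \<Rightarrow> real \<Rightarrow> real" where
  "quant N u = Inf {x. clamp u \<le> cdf N x}"

lemma clamp_in: "0 < clamp u" "clamp u < 1"
  by (auto simp: clamp_def)

lemma clamp_id: "0 < u \<Longrightarrow> u < 1 \<Longrightarrow> clamp u = u"
  by (simp add: clamp_def)

lemma clamp_measurable[measurable]: "clamp \<in> borel_measurable borel"
  unfolding clamp_def by measurable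

lemma quant_measurable[measurable]:
  assumes "real_distribution N" shows "quant N \<in> borel_measurable borel"
proof -
  interpret cdf_distribution N using assms by (simp add: cdf_distribution_def)
  have "clamp \<in> measurable borel (restrict_space borel {0<..<1})"
    by (rule measurable_restrict_space2) (auto simp: clamp_in)
  then have "(\<lambda>u. I (clamp u)) \<in> borel_measurable borel"
    using measurable_CI by (rule measurable_compose)
  then show ?thesis unfolding quant_def[abs_def] .
qed

lemma quant_le_iff:
  assumes "real_distribution N" shows "quant N u \<le> x \<longleftrightarrow> clamp u \<le> cdf N x"
proof -
  interpret cdf_distribution N using assms by (simp add: cdf_distribution_def)
  show ?thesis unfolding quant_def using pseudoinverse[of "clamp u" x] clamp_in by auto
qed

lemma cdf_quant:
  assumes N: "real_distribution N" and at: "\<And>x. measure N {x} = 0"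
  shows "cdf N (quant N u) = clamp u"
proof -
  define q where "q = quant N u"
  have le: "clamp u \<le> cdf N q" using quant_le_iff[OF N, of u q] by (simp add: q_def)
  show ?thesis unfolding q_def[symmetric]
  proof (rule ccontr)
    assume "cdf N q \<noteq> clamp u"
    then have gt: "clamp u < cdf N q" using le by simp
    have "isCont (cdf N) q" using finite_borel_measure.isCont_cdf[OF real_distribution.finite_borel_measure_M[OF N]] at by simp
    then have "((cdf N) \<longlongrightarrow> cdf N q) (at q)" by (simp add: isCont_def)
    then have "eventually (\<lambda>x. clamp u < cdf N x) (at q)" using gt by (rule order_tendstoD)
    then obtain d where d: "d > 0" "\<And>x. x \<noteq> q \<Longrightarrow> dist x q < d \<Longrightarrow> clamp u < cdf N x"
      unfolding eventually_at by blast
    have "clamp u < cdf N (q - d/2)" using d by (intro d(2)) (auto simp: dist_real_def)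
    then have "q \<le> q - d/2" using quant_le_iff[OF N, of u "q - d/2"] by (simp add: q_def)
    then show False using d by simp
  qed
qed

context prob_space
begin

lemma PIT_less:
  assumes V[measurable]: "V \<in> borel_measurable M" and at: "\<And>v. prob {\<omega>\<in>space M. V \<omega> = v} = 0"
    and u: "0 < u" "u < 1"
  shows "prob {\<omega>\<in>space M. cdf (distr M borel V) (V \<omega>) < u} = u"
proof -
  define N where "N = distr M borel V"
  have N: "real_distribution N" unfolding N_def by simp
  interpret N: real_distribution N by (rule N)
  have atN: "measure N {x} = 0" for x
    unfolding N_def using at[of x] by (subst measure_distr) (auto simp: vimage_def Int_def conj_commute intro!: arg_cong[where f="measure M"])
  define q where "q = quant N u"
  have "{\<omega>\<in>space M. cdf N (V \<omega>) < u} = {\<omega>\<in>space M. V \<omega> < q}"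
  proof -
    have "cdf N v < u \<longleftrightarrow> v < q" for v
      using quant_le_iff[OF N, of u v] clamp_id[OF u] unfolding q_def by (metis not_le)
    then show ?thesis by blast
  qed
  then have "prob {\<omega>\<in>space M. cdf N (V \<omega>) < u} = measure N {..<q}"
    unfolding N_def by (subst measure_distr) (auto simp: vimage_def Int_def conj_commute)
  also have "\<dots> = measure N {..q}"
  proof -
    have "measure N {..q} = measure N ({..<q} \<union> {q})" by (simp add: ivl_disj_un(2)[symmetric])
    also have "\<dots> = measure N {..<q} + measure N {q}" by (subst N.finite_measure_Union) auto
    finally show ?thesis using atN by simp
  qed
  also have "\<dots> = u" using cdf_quant[OF N atN, of u] clamp_id[OF u] by (simp add: cdf_def q_def)
  finally show ?thesis unfolding N_def .
qed

lemma PIT_le: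
  assumes V[measurable]: "V \<in> borel_measurable M" and at: "\<And>v. prob {\<omega>\<in>space M. V \<omega> = v} = 0"
    and c: "0 \<le> c" "c \<le> 1"
  shows "prob {\<omega>\<in>space M. cdf (distr M borel V) (V \<omega>) \<le> c} = c"
proof -
  define N where "N = distr M borel V"
  have N: "real_distribution N" unfolding N_def by simp
  interpret N: real_distribution N by (rule N)
  have [measurable]: "cdf N \<in> borel_measurable borel"
    by (intro borel_measurable_mono) (auto simp: mono_def N.cdf_nondecreasing)
  let ?U = "\<lambda>\<omega>. cdf N (V \<omega>)"
  show ?thesis
  proof (cases "c = 1")
    case True
    have "{\<omega>\<in>space M. ?U \<omega> \<le> c} = space M" using N.cdf_bounded_prob True by auto
    then show ?thesis using True by (simp add: N_def prob_space)
  next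
    case False
    then have c1: "c < 1" using c by simp
    have upper: "prob {\<omega>\<in>space M. ?U \<omega> \<le> c} \<le> c"
    proof (rule field_le_epsilon)
      fix e :: real assume e: "0 < e"
      show "prob {\<omega>\<in>space M. ?U \<omega> \<le> c} \<le> c + e"
      proof (cases "c + e < 1")
        case True
        have "prob {\<omega>\<in>space M. ?U \<omega> \<le> c} \<le> prob {\<omega>\<in>space M. ?U \<omega> < c + e}"
          using e by (intro finite_measure_mono) auto
        also have "\<dots> = c + e" using PIT_less[OF V at, of "c + e"] True c e by (simp add: N_def)
        finally show ?thesis .
      next
        case False
        then show ?thesis using prob_le_1[of "{\<omega>\<in>space M. ?U \<omega> \<le> c}"] by linarith
      qed
    qed
    have lower: "c \<le> prob {\<omega>\<in>space M. ?U \<omega> \<le> c}"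
    proof (cases "c = 0")
      case True then show ?thesis by simp
    next
      case False
      then have "c = prob {\<omega>\<in>space M. ?U \<omega> < c}" using PIT_less[OF V at, of c] c c1 by (simp add: N_def)
      also have "\<dots> \<le> prob {\<omega>\<in>space M. ?U \<omega> \<le> c}" by (intro finite_measure_mono) auto
      finally show ?thesis .
    qed
    show ?thesis using upper lower unfolding N_def by simp
  qed
qed

lemma PIT_bad_null:
  assumes V[measurable]: "V \<in> borel_measurable M" and at: "\<And>v. prob {\<omega>\<in>space M. V \<omega> = v} = 0"
  shows "AE \<omega> in M. 0 < cdf (distr M borel V) (V \<omega>) \<and> cdf (distr M borel V) (V \<omega>) < 1"
proof -
  define N where "N = distr M borel V"
  have N: "real_distribution N" unfolding N_def by simp
  interpret N: real_distribution N by (rule N)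
  have [measurable]: "cdf N \<in> borel_measurable borel"
    by (intro borel_measurable_mono) (auto simp: mono_def N.cdf_nondecreasing)
  let ?U = "\<lambda>\<omega>. cdf N (V \<omega>)"
  have p0: "prob {\<omega>\<in>space M. ?U \<omega> \<le> 0} = 0" using PIT_le[OF V at, of 0] by (simp add: N_def)
  have p1: "prob {\<omega>\<in>space M. 1 \<le> ?U \<omega>} \<le> 0"
  proof (rule field_le_epsilon)
    fix e :: real assume e: "0 < e"
    show "prob {\<omega>\<in>space M. 1 \<le> ?U \<omega>} \<le> 0 + e"
    proof (cases "e < 1")
      case True
      have "prob {\<omega>\<in>space M. 1 \<le> ?U \<omega>} \<le> prob (space M - {\<omega>\<in>space M. ?U \<omega> \<le> 1 - e})"
        using e by (intro finite_measure_mono) auto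
      also have "\<dots> = 1 - prob {\<omega>\<in>space M. ?U \<omega> \<le> 1 - e}" by (subst prob_compl) auto
      also have "\<dots> = e" using PIT_le[OF V at, of "1 - e"] True e by (simp add: N_def)
      finally show ?thesis by simp
    next
      case False
      then show ?thesis using prob_le_1[of "{\<omega>\<in>space M. 1 \<le> ?U \<omega>}"] by linarith
    qed
  qed
  have "prob ({\<omega>\<in>space M. ?U \<omega> \<le> 0} \<union> {\<omega>\<in>space M. 1 \<le> ?U \<omega>}) \<le>
        prob {\<omega>\<in>space M. ?U \<omega> \<le> 0} + prob {\<omega>\<in>space M. 1 \<le> ?U \<omega>}"
    by (rule measure_subadditive) (auto simp: emeasure_eq_measure)
  then have z: "prob ({\<omega>\<in>space M. ?U \<omega> \<le> 0} \<union> {\<omega>\<in>space M. 1 \<le> ?U \<omega>}) = 0"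
    using p0 p1 measure_nonneg[of M "{\<omega>\<in>space M. ?U \<omega> \<le> 0} \<union> {\<omega>\<in>space M. 1 \<le> ?U \<omega>}"] by linarith
  have "AE \<omega> in M. \<omega> \<notin> ({\<omega>\<in>space M. ?U \<omega> \<le> 0} \<union> {\<omega>\<in>space M. 1 \<le> ?U \<omega>})"
    by (rule AE_not_in) (use z in \<open>auto simp: emeasure_eq_measure\<close>)
  then show ?thesis unfolding N_def[symmetric] using AE_space by eventually_elim auto
qed

lemma quant_distr:
  assumes U[measurable]: "U \<in> borel_measurable M"
    and Ul: "\<And>c. 0 \<le> c \<Longrightarrow> c \<le> 1 \<Longrightarrow> prob {\<omega>\<in>space M. U \<omega> \<le> c} = c"
    and N: "real_distribution N"
    and Uin: "\<And>\<omega>. \<omega> \<in> space M \<Longrightarrow> 0 < U \<omega> \<and> U \<omega> < 1"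
  shows "distr M borel (\<lambda>\<omega>. quant N (U \<omega>)) = N"
proof -
  interpret N: real_distribution N by (rule N)
  have [measurable]: "quant N \<in> borel_measurable borel" using N by (rule quant_measurable)
  have [measurable]: "cdf N \<in> borel_measurable borel"
    by (intro borel_measurable_mono) (auto simp: mono_def N.cdf_nondecreasing)
  have [measurable]: "(\<lambda>\<omega>. quant N (U \<omega>)) \<in> borel_measurable M" by measurable
  show ?thesis
  proof (rule cdf_unique)
    show "real_distribution (distr M borel (\<lambda>\<omega>. quant N (U \<omega>)))" by simp
    show "real_distribution N" by (rule N)
    show "cdf (distr M borel (\<lambda>\<omega>. quant N (U \<omega>))) = cdf N"
    proof
      fix x
      have "cdf (distr M borel (\<lambda>\<omega>. quant N (U \<omega>))) x = prob {\<omega>\<in>space M. quant N (U \<omega>) \<le> x}"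
        unfolding cdf_def by (subst measure_distr) (auto simp: vimage_def Int_def conj_commute)
      also have "\<dots> = prob {\<omega>\<in>space M. U \<omega> \<le> cdf N x}"
        using quant_le_iff[OF N] Uin clamp_id by (intro arg_cong[where f=prob] Collect_cong) auto
      also have "\<dots> = cdf N x" using Ul[of "cdf N x"] N.cdf_nonneg N.cdf_bounded_prob by simp
      finally show "cdf (distr M borel (\<lambda>\<omega>. quant N (U \<omega>))) x = cdf N x" .
    qed
  qed
qed

lemma ae_eq_of_le_same_distr:
  fixes V W :: "'a \<Rightarrow> real"
  assumes [measurable]: "V \<in> borel_measurable M" "W \<in> borel_measurable M"
    and eq: "distr M borel W = distr M borel V" and le: "AE \<omega> in M. W \<omega> \<le> V \<omega>"
  shows "AE \<omega> in M. V \<omega> = W \<omega>"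
proof -
  have q: "AE \<omega> in M. W \<omega> \<le> r \<longrightarrow> V \<omega> \<le> r" for r
  proof -
    define A where "A = {\<omega>\<in>space M. V \<omega> \<le> r}"
    define B where "B = {\<omega>\<in>space M. W \<omega> \<le> r}"
    have [measurable]: "A \<in> sets M" "B \<in> sets M" unfolding A_def B_def by measurable
    have "prob A = measure (distr M borel V) {..r}"
      unfolding A_def by (subst measure_distr) (auto simp: vimage_def Int_def conj_commute)
    also have "\<dots> = measure (distr M borel W) {..r}" using eq by simp
    also have "\<dots> = prob B"
      unfolding B_def by (subst measure_distr) (auto simp: vimage_def Int_def conj_commute)
    finally have AB: "prob A = prob B" .
    have "prob (B \<inter> A) = prob A"
      by (rule finite_measure_eq_AE) (use le in \<open>auto simp: A_def B_def elim!: eventually_mono\<close>)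
    then have "prob (B - A) = 0" using AB by (simp add: finite_measure_Diff')
    then have "AE \<omega> in M. \<omega> \<notin> B - A"
      by (intro AE_not_in) (auto simp: emeasure_eq_measure)
    then show ?thesis using AE_space by eventually_elim (auto simp: A_def B_def)
  qed
  have "AE \<omega> in M. \<forall>q::rat. W \<omega> \<le> of_rat q \<longrightarrow> V \<omega> \<le> of_rat q"
    using q by (simp add: AE_all_countable)
  with le show ?thesis
  proof eventually_elim
    case (elim \<omega>)
    show ?case
    proof (rule ccontr)
      assume "V \<omega> \<noteq> W \<omega>"
      then have "W \<omega> < V \<omega>" using elim by simp
      then obtain r where "r \<in> \<rat>" "W \<omega> < r" "r < V \<omega>" using Rats_dense_in_real by blast
      then obtain q where "r = of_rat q" by (auto elim: Rats_cases)
      then have "V \<omega> \<le> r" using elim(2) \<open>W \<omega> < r\<close> by auto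
      then show False using \<open>r < V \<omega>\<close> by simp
    qed
  qed
qed

lemma cell_lemma:
  fixes Y :: "'a \<Rightarrow> 'b::polish_space" and V :: "'a \<Rightarrow> real"
    and R :: "real \<Rightarrow> 'b" and hb :: "'b \<Rightarrow> real" and \<tau>b :: "real \<Rightarrow> 'b"
  assumes Y[measurable]: "Y \<in> borel_measurable M" and V[measurable]: "V \<in> borel_measurable M"
    and hb[measurable]: "hb \<in> borel_measurable borel" and \<tau>b[measurable]: "\<tau>b \<in> borel_measurable borel"
    and inv: "\<And>y. \<tau>b (hb y) = y"
    and atY: "\<And>y. prob {\<omega>\<in>space M. Y \<omega> = y} = 0"
    and VR: "\<And>\<omega>. \<omega> \<in> space M \<Longrightarrow> Y \<omega> = R (V \<omega>)"
  shows "\<exists>Z G. Z \<in> borel_measurable M \<and> distr M borel Z = distr M borel Y \<and>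
     G \<in> borel_measurable borel \<and> (AE \<omega> in M. V \<omega> = G (Z \<omega>))"
proof -
  define L where "L = distr M borel V"
  define N where "N = distr M borel (\<lambda>\<omega>. hb (Y \<omega>))"
  have L: "real_distribution L" unfolding L_def by simp
  have N: "real_distribution N" unfolding N_def by simp
  interpret L: real_distribution L by (rule L)
  interpret N: real_distribution N by (rule N)
  have [measurable]: "cdf L \<in> borel_measurable borel"
    by (intro borel_measurable_mono) (auto simp: mono_def L.cdf_nondecreasing)
  have [measurable]: "cdf N \<in> borel_measurable borel"
    by (intro borel_measurable_mono) (auto simp: mono_def N.cdf_nondecreasing)
  have [measurable]: "quant L \<in> borel_measurable borel" "quant N \<in> borel_measurable borel"
    using L N by (auto intro: quant_measurable)
  have atV: "prob {\<omega>\<in>space M. V \<omega> = v} = 0" for v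
  proof -
    have "prob {\<omega>\<in>space M. V \<omega> = v} \<le> prob {\<omega>\<in>space M. Y \<omega> = R v}"
      using VR by (intro finite_measure_mono) auto
    then show ?thesis using atY[of "R v"] measure_nonneg[of M] by (metis antisym)
  qed
  have atN: "measure N {t} = 0" for t
  proof -
    have "measure N {t} = prob {\<omega>\<in>space M. hb (Y \<omega>) = t}"
      unfolding N_def by (subst measure_distr) (auto simp: vimage_def Int_def conj_commute intro!: arg_cong[where f="measure M"])
    also have "\<dots> \<le> prob {\<omega>\<in>space M. Y \<omega> = \<tau>b t}"
      using inv by (intro finite_measure_mono) auto
    finally show ?thesis using atY[of "\<tau>b t"] measure_nonneg[of N] by (metis antisym)
  qed
  define U where "U \<omega> = clamp (cdf L (V \<omega>))" for \<omega>
  have U[measurable]: "U \<in> borel_measurable M" unfolding U_def by measurable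
  have bad: "AE \<omega> in M. 0 < cdf L (V \<omega>) \<and> cdf L (V \<omega>) < 1"
    unfolding L_def using PIT_bad_null[OF V atV] .
  have Ul: "prob {\<omega>\<in>space M. U \<omega> \<le> c} = c" if c: "0 \<le> c" "c \<le> 1" for c
  proof -
    have "prob {\<omega>\<in>space M. U \<omega> \<le> c} = prob {\<omega>\<in>space M. cdf L (V \<omega>) \<le> c}"
    proof (rule finite_measure_eq_AE)
      show "AE \<omega> in M. (\<omega> \<in> {\<omega>\<in>space M. U \<omega> \<le> c}) = (\<omega> \<in> {\<omega>\<in>space M. cdf L (V \<omega>) \<le> c})"
        using bad by eventually_elim (auto simp: U_def clamp_id)
    qed auto
    also have "\<dots> = c" using PIT_le[OF V atV c] by (simp add: L_def)
    finally show ?thesis .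
  qed
  have Uin: "0 < U \<omega> \<and> U \<omega> < 1" for \<omega> unfolding U_def using clamp_in by auto
  define W where "W \<omega> = quant N (U \<omega>)" for \<omega>
  have W[measurable]: "W \<in> borel_measurable M" unfolding W_def by measurable
  have distrW: "distr M borel W = N"
    unfolding W_def by (rule quant_distr[OF U Ul N Uin])
  define Z where "Z \<omega> = \<tau>b (W \<omega>)" for \<omega>
  have Z[measurable]: "Z \<in> borel_measurable M" unfolding Z_def by measurable
  have distrZ: "distr M borel Z = distr M borel Y"
  proof -
    have "distr M borel Z = distr (distr M borel W) borel \<tau>b"
      unfolding Z_def by (subst distr_distr) (auto simp: comp_def)
    also have "\<dots> = distr (distr M borel (\<lambda>\<omega>. hb (Y \<omega>))) borel \<tau>b"
      using distrW by (simp add: N_def)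
    also have "\<dots> = distr M borel Y"
      by (subst distr_distr) (auto simp: comp_def inv)
    finally show ?thesis .
  qed
  have hbZ: "AE \<omega> in M. hb (Z \<omega>) = W \<omega>"
  proof -
    have a: "AE t in distr M borel (\<lambda>\<omega>. hb (Y \<omega>)). hb (\<tau>b t) = t"
      by (subst AE_distr_iff) (auto simp: inv)
    have dW: "distr M borel W = distr M borel (\<lambda>\<omega>. hb (Y \<omega>))" using distrW by (simp add: N_def)
    have "AE t in distr M borel W. hb (\<tau>b t) = t" unfolding dW by (rule a)
    then show ?thesis unfolding Z_def by (subst (asm) AE_distr_iff) auto
  qed
  have cW: "cdf N (W \<omega>) = U \<omega>" for \<omega>
    unfolding W_def using cdf_quant[OF N atN, of "U \<omega>"] clamp_id Uin by simp
  define W2 where "W2 \<omega> = quant L (U \<omega>)" for \<omega>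
  have W2[measurable]: "W2 \<in> borel_measurable M" unfolding W2_def by measurable
  have distrW2: "distr M borel W2 = distr M borel V"
    unfolding W2_def L_def[symmetric] by (rule quant_distr[OF U Ul L Uin])
  have "AE \<omega> in M. W2 \<omega> \<le> V \<omega>"
    using bad
  proof eventually_elim
    case (elim \<omega>)
    then have "U \<omega> = cdf L (V \<omega>)" by (simp add: U_def clamp_id)
    then show ?case unfolding W2_def using quant_le_iff[OF L, of "U \<omega>" "V \<omega>"] elim clamp_id by simp
  qed
  from ae_eq_of_le_same_distr[OF V W2 distrW2 this]
  have VW2: "AE \<omega> in M. V \<omega> = W2 \<omega>" .
  define G where "G z = quant L (cdf N (hb z))" for z
  have G: "G \<in> borel_measurable borel" unfolding G_def by measurable
  have "AE \<omega> in M. V \<omega> = G (Z \<omega>)"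
    using VW2 hbZ by eventually_elim (simp add: G_def W2_def cW)
  then show ?thesis using Z distrZ G by blast
qed

end


instance prod :: (polish_space, polish_space) polish_space ..

lemma atomless_singleton:
  assumes "atomless N" "{x} \<in> sets N"
  shows "measure N {x} = 0"
proof (rule ccontr)
  assume "measure N {x} \<noteq> 0"
  then have "measure N {x} > 0" using measure_nonneg[of N "{x}"] by linarith
  moreover have "\<forall>B\<in>sets N. B \<subseteq> {x} \<longrightarrow> measure N B = 0 \<or> measure N B = measure N {x}"
    by (auto simp: subset_singleton_iff)
  ultimately show False using assms unfolding atomless_def by blast
qed

theorem theorem12:
  fixes M :: "'w measure"
    and X :: "'w \<Rightarrow> 'a::polish_space"
    and Y :: "'w \<Rightarrow> 'b::polish_space"
    and \<epsilon> :: real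
  assumes "prob_space M"
    and "X \<in> borel_measurable M"
    and "Y \<in> borel_measurable M"
    and "atomless (distr M borel Y)"
    and "\<epsilon> > 0"
  shows "\<exists>Z \<in> borel_measurable M.
           distr M borel Z = distr M borel Y \<and>
           (AE \<omega> in M. dist (Y \<omega>) (Z \<omega>) \<le> \<epsilon>) \<and>
           (\<exists>f :: 'b \<Rightarrow> 'a. f \<in> borel_measurable borel \<and> (AE \<omega> in M. X \<omega> = f (Z \<omega>)))"
proof -
  interpret prob_space M by fact
  have X[measurable]: "X \<in> borel_measurable M" and Y[measurable]: "Y \<in> borel_measurable M"
    using assms by auto
  have atY: "prob {\<omega>\<in>space M. Y \<omega> = y} = 0" for y
  proof -
    have "measure (distr M borel Y) {y} = 0"
      using atomless_singleton[OF assms(4)] by simp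
    then show ?thesis by (subst (asm) measure_distr) (auto simp: vimage_def Int_def conj_commute intro!: arg_cong[where f="measure M"])
  qed
  obtain hb :: "'b \<Rightarrow> real" and \<tau>b where hb[measurable]: "hb \<in> borel_measurable borel"
    and \<tau>b[measurable]: "\<tau>b \<in> borel_measurable borel" and invb: "\<And>y. \<tau>b (hb y) = y"
    using polish_embedding by blast
  obtain hp :: "'b \<times> 'a \<Rightarrow> real" and \<tau>p where hp[measurable]: "hp \<in> borel_measurable borel"
    and \<tau>p[measurable]: "\<tau>p \<in> borel_measurable borel" and invp: "\<And>y. \<tau>p (hp y) = y"
    using polish_embedding by blast
  define V where "V \<omega> = hp (Y \<omega>, X \<omega>)" for \<omega>
  have V[measurable]: "V \<in> borel_measurable M" unfolding V_def by measurable
  obtain d :: "nat \<Rightarrow> 'b" where d: "\<And>y e. e > 0 \<Longrightarrow> \<exists>j. dist (d j) y < e"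
    using dense_seq by blast
  define kidx where "kidx y = (LEAST k. dist (d k) y < \<epsilon> / 2)" for y
  have kidx[measurable]: "kidx \<in> measurable borel (count_space UNIV)"
    unfolding kidx_def by measurable
  have kprop: "dist (d (kidx y)) y < \<epsilon> / 2" for y
    unfolding kidx_def by (rule LeastI_ex) (use d[of "\<epsilon>/2" y] assms(5) in auto)
  define A where "A k = {\<omega>\<in>space M. kidx (Y \<omega>) = k}" for k
  have A[measurable]: "A k \<in> sets M" for k unfolding A_def by measurable
  define P where "P k = uniform_measure M (A k)" for k
  have cell: "\<exists>Z G. emeasure M (A k) \<noteq> 0 \<longrightarrow> (Z \<in> borel_measurable M \<and>
      distr (P k) borel Z = distr (P k) borel Y \<and> G \<in> borel_measurable borel \<and>
      (AE \<omega> in P k. V \<omega> = G (Z \<omega>)))" for k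
  proof (cases "emeasure M (A k) = 0")
    case True then show ?thesis by blast
  next
    case False
    have fin: "emeasure M (A k) \<noteq> \<infinity>" by (simp add: emeasure_eq_measure)
    interpret Pk: prob_space "P k" unfolding P_def using False fin by (rule prob_space_uniform_measure)
    have mc: "measurable (P k) N = measurable M N" for N :: "'z measure"
      unfolding P_def by (rule measurable_cong_sets) auto
    have atYk: "Pk.prob {\<omega>\<in>space (P k). Y \<omega> = y} = 0" for y
    proof -
      have "Pk.prob {\<omega>\<in>space (P k). Y \<omega> = y} = measure M (A k \<inter> {\<omega>\<in>space M. Y \<omega> = y}) / measure M (A k)"
        unfolding P_def using False fin by simp
      moreover have "measure M (A k \<inter> {\<omega>\<in>space M. Y \<omega> = y}) \<le> prob {\<omega>\<in>space M. Y \<omega> = y}"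
        by (intro finite_measure_mono) auto
      ultimately show ?thesis using atY[of y] measure_nonneg[of M "A k \<inter> {\<omega>\<in>space M. Y \<omega> = y}"] by simp
    qed
    have "\<exists>Z G. Z \<in> borel_measurable (P k) \<and> distr (P k) borel Z = distr (P k) borel Y \<and>
       G \<in> borel_measurable borel \<and> (AE \<omega> in P k. V \<omega> = G (Z \<omega>))"
    proof -
      have YP: "Y \<in> borel_measurable (P k)" and VP: "V \<in> borel_measurable (P k)"
        by (simp_all add: mc)
      have VR: "Y \<omega> = fst (\<tau>p (V \<omega>))" if "\<omega> \<in> space (P k)" for \<omega>
        by (simp add: V_def invp)
      show ?thesis
        by (rule Pk.cell_lemma[where Y=Y and V=V and hb=hb and \<tau>b=\<tau>b and R="\<lambda>v. fst (\<tau>p v)", OF YP VP hb \<tau>b invb atYk VR])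
    qed
    then show ?thesis by (auto simp: mc)
  qed
  obtain Zs Gs where ZG: "\<And>k. emeasure M (A k) \<noteq> 0 \<Longrightarrow> Zs k \<in> borel_measurable M \<and>
      distr (P k) borel (Zs k) = distr (P k) borel Y \<and> Gs k \<in> borel_measurable borel \<and>
      (AE \<omega> in P k. V \<omega> = Gs k (Zs k \<omega>))"
    using cell by metis
  define Zk where "Zk k = (if emeasure M (A k) \<noteq> 0 then Zs k else Y)" for k
  define Z where "Z \<omega> = Zk (kidx (Y \<omega>)) \<omega>" for \<omega>
  have Zk[measurable]: "Zk k \<in> borel_measurable M" for k
    using ZG[of k] by (auto simp: Zk_def)
  have Zm[measurable]: "Z \<in> borel_measurable M"
    unfolding Z_def by (rule measurable_compose_countable[OF Zk]) measurable
  define fk where "fk k z = (if emeasure M (A k) \<noteq> 0 then snd (\<tau>p (Gs k z)) else undefined)" for k z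
  define f where "f z = fk (kidx z) z" for z
  have sndm: "(snd :: 'b \<times> 'a \<Rightarrow> 'a) \<in> borel_measurable borel"
    by (rule borel_measurable_continuous_onI) (intro continuous_intros)
  have fk[measurable]: "fk k \<in> borel_measurable borel" for k
    using ZG[of k] by (cases "emeasure M (A k) = 0")
      (auto simp: fk_def[abs_def] intro!: measurable_compose[OF _ sndm] measurable_compose[OF _ \<tau>p])
  have fm: "f \<in> borel_measurable borel"
    unfolding f_def by (rule measurable_compose_countable[OF fk]) measurable
  have mc: "measurable (P k) N = measurable M N" for k and N :: "'z measure"
    unfolding P_def by (rule measurable_cong_sets) auto
  have good: "AE \<omega> in M. \<omega> \<in> A k \<longrightarrow> (kidx (Z \<omega>) = k \<and> X \<omega> = f (Z \<omega>))" for k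
  proof (cases "emeasure M (A k) = 0")
    case True
    then have "AE \<omega> in M. \<omega> \<notin> A k" by (intro AE_not_in) auto
    then show ?thesis by eventually_elim auto
  next
    case False
    have fin: "emeasure M (A k) \<noteq> \<infinity>" by (simp add: emeasure_eq_measure)
    have finl: "emeasure M (A k) < \<infinity>" using fin by (simp add: less_top[symmetric])
    from ZG[OF False] have Zs[measurable]: "Zs k \<in> borel_measurable M"
      and dZ: "distr (P k) borel (Zs k) = distr (P k) borel Y"
      and AEV: "AE \<omega> in P k. V \<omega> = Gs k (Zs k \<omega>)" by auto
    have "AE x in distr (P k) borel Y. kidx x = k"
    proof (subst AE_distr_iff)
      show "Y \<in> measurable (P k) borel" by (simp add: mc)
      show "{x \<in> space borel. kidx x = k} \<in> sets borel" by measurable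
      show "AE \<omega> in P k. kidx (Y \<omega>) = k"
        unfolding P_def by (subst AE_uniform_measure[OF False finl]) (auto simp: A_def)
    qed
    then have "AE x in distr (P k) borel (Zs k). kidx x = k" unfolding dZ .
    then have "AE \<omega> in P k. kidx (Zs k \<omega>) = k" by (subst (asm) AE_distr_iff) (auto simp: mc)
    with AEV have "AE \<omega> in P k. kidx (Zs k \<omega>) = k \<and> V \<omega> = Gs k (Zs k \<omega>)"
      by eventually_elim auto
    then have "AE \<omega> in M. \<omega> \<in> A k \<longrightarrow> kidx (Zs k \<omega>) = k \<and> V \<omega> = Gs k (Zs k \<omega>)"
      unfolding P_def by (subst (asm) AE_uniform_measure[OF False finl]) auto
    then show ?thesis
    proof eventually_elim
      case (elim \<omega>)
      show ?case
      proof
        assume "\<omega> \<in> A k"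
        then have k: "kidx (Y \<omega>) = k" by (simp add: A_def)
        have Z\<omega>: "Z \<omega> = Zs k \<omega>" using False by (simp add: Z_def Zk_def k)
        have kz: "kidx (Z \<omega>) = k" using elim \<open>\<omega> \<in> A k\<close> Z\<omega> by simp
        have G: "Gs k (Zs k \<omega>) = hp (Y \<omega>, X \<omega>)" using elim \<open>\<omega> \<in> A k\<close> by (simp add: V_def)
        have "f (Z \<omega>) = snd (\<tau>p (Gs k (Zs k \<omega>)))" using False kz by (simp add: Z\<omega> f_def fk_def)
        also have "\<dots> = X \<omega>" by (simp add: G invp)
        finally show "kidx (Z \<omega>) = k \<and> X \<omega> = f (Z \<omega>)" using kz by simp
      qed
    qed
  qed
  have "AE \<omega> in M. \<forall>k. \<omega> \<in> A k \<longrightarrow> (kidx (Z \<omega>) = k \<and> X \<omega> = f (Z \<omega>))"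
    using good by (simp add: AE_all_countable)
  then have AEall: "AE \<omega> in M. dist (Y \<omega>) (Z \<omega>) \<le> \<epsilon> \<and> X \<omega> = f (Z \<omega>)"
    using AE_space
  proof eventually_elim
    case (elim \<omega>)
    then have "\<omega> \<in> A (kidx (Y \<omega>))" by (simp add: A_def)
    with elim have kz: "kidx (Z \<omega>) = kidx (Y \<omega>)" and Xf: "X \<omega> = f (Z \<omega>)" by auto
    have "dist (Y \<omega>) (Z \<omega>) \<le> dist (Y \<omega>) (d (kidx (Y \<omega>))) + dist (d (kidx (Y \<omega>))) (Z \<omega>)"
      by (rule dist_triangle)
    also have "\<dots> < \<epsilon>" using kprop[of "Y \<omega>"] kprop[of "Z \<omega>"] kz by (simp add: dist_commute)
    finally show ?case using Xf by simp
  qed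
  have law: "distr M borel Z = distr M borel Y"
  proof (rule measure_eqI)
    show "sets (distr M borel Z) = sets (distr M borel Y)" by simp
    fix S assume "S \<in> sets (distr M borel Z)"
    then have S[measurable]: "S \<in> sets borel" by simp
    have ZS[measurable]: "Z -` S \<inter> space M \<in> sets M" and YS[measurable]: "Y -` S \<inter> space M \<in> sets M"
      by measurable
    have eqk: "emeasure M (A k \<inter> (Z -` S \<inter> space M)) = emeasure M (A k \<inter> (Y -` S \<inter> space M))" for k
    proof (cases "emeasure M (A k) = 0")
      case True
      have "emeasure M (A k \<inter> (Z -` S \<inter> space M)) \<le> emeasure M (A k)" by (intro emeasure_mono) auto
      moreover have "emeasure M (A k \<inter> (Y -` S \<inter> space M)) \<le> emeasure M (A k)" by (intro emeasure_mono) auto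
      ultimately show ?thesis using True by simp
    next
      case False
      have fin: "emeasure M (A k) \<noteq> \<infinity>" by (simp add: emeasure_eq_measure)
      from ZG[OF False] have Zs[measurable]: "Zs k \<in> borel_measurable M"
        and dZ: "distr (P k) borel (Zs k) = distr (P k) borel Y" by auto
      have ZsS[measurable]: "Zs k -` S \<inter> space M \<in> sets M" by measurable
      have set: "A k \<inter> (Z -` S \<inter> space M) = A k \<inter> (Zs k -` S \<inter> space M)"
        using False by (auto simp: A_def Z_def Zk_def)
      have "measure (P k) (Zs k -` S \<inter> space (P k)) = measure (distr (P k) borel (Zs k)) S"
        by (subst measure_distr) (auto simp: mc)
      also have "\<dots> = measure (distr (P k) borel Y) S" by (simp add: dZ)
      also have "\<dots> = measure (P k) (Y -` S \<inter> space (P k))" by (subst measure_distr) (auto simp: mc)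
      finally have "measure (P k) (Zs k -` S \<inter> space M) = measure (P k) (Y -` S \<inter> space M)"
        by (simp add: P_def)
      then have "measure M (A k \<inter> (Zs k -` S \<inter> space M)) / measure M (A k) =
          measure M (A k \<inter> (Y -` S \<inter> space M)) / measure M (A k)"
        unfolding P_def using False fin by simp
      moreover have "measure M (A k) \<noteq> 0" using False by (simp add: emeasure_eq_measure)
      ultimately have "measure M (A k \<inter> (Zs k -` S \<inter> space M)) = measure M (A k \<inter> (Y -` S \<inter> space M))"
        by simp
      then show ?thesis using set by (simp add: emeasure_eq_measure)
    qed
    have disj: "disjoint_family (\<lambda>k. A k \<inter> (W -` S \<inter> space M))" for W :: "'w \<Rightarrow> 'b"
      by (auto simp: disjoint_family_on_def A_def)
    have un: "(\<Union>k. A k \<inter> (W -` S \<inter> space M)) = W -` S \<inter> space M" for W :: "'w \<Rightarrow> 'b"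
      by (auto simp: A_def)
    have "emeasure (distr M borel Z) S = emeasure M (Z -` S \<inter> space M)" by (simp add: emeasure_distr)
    also have "\<dots> = emeasure M (\<Union>k. A k \<inter> (Z -` S \<inter> space M))" by (simp only: un)
    also have "\<dots> = (\<Sum>k. emeasure M (A k \<inter> (Z -` S \<inter> space M)))"
      by (rule suminf_emeasure[symmetric]) (auto simp: disj)
    also have "\<dots> = (\<Sum>k. emeasure M (A k \<inter> (Y -` S \<inter> space M)))" by (simp add: eqk)
    also have "\<dots> = emeasure M (\<Union>k. A k \<inter> (Y -` S \<inter> space M))"
      by (rule suminf_emeasure) (auto simp: disj)
    also have "\<dots> = emeasure M (Y -` S \<inter> space M)" by (simp only: un)
    also have "\<dots> = emeasure (distr M borel Y) S" by (simp add: emeasure_distr)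
    finally show "emeasure (distr M borel Z) S = emeasure (distr M borel Y) S" .
  qed
  have "AE \<omega> in M. dist (Y \<omega>) (Z \<omega>) \<le> \<epsilon>" using AEall by (auto elim: eventually_mono)
  moreover have "AE \<omega> in M. X \<omega> = f (Z \<omega>)" using AEall by (auto elim: eventually_mono)
  ultimately show ?thesis using Zm law fm by blast
qed

end
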